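(* Let $\theta^*$ be an optimal solution of OPT with completion times $T_1^*,\dots,T_M^*$, and let $c_{i,j}$ be the constants from the CDR Rule (for every pair $i,j$, $s'(\theta_i^*(t))/s'(\theta_j^*(t))=c_{i,j}$ whenever $\theta_i^*(t)>0$ and $\theta_j^*(t)>0$). Let $i,j$ be jobs and $t_1,t_2$ times with $\max\{t_1,t_2\}<\min\{T_i^*,T_j^*\}$ such that $\theta_i^*(t_1)>0$, $\theta_j^*(t_1)>0$, $\theta_i^*(t_2)>0$ and $\theta_j^*(t_2)=0$. Then $$c_{i,j}=\frac{s'(\theta_i^*(t_1))}{s'(\theta_j^*(t_1))}\le\frac{s'(\theta_i^*(t_2))}{s'(0)}.$$
   Context: Setting (problem OPT). There are $M$ jobs, all available at time $0$, with sizes $x_1\ge x_2\ge\cdots\ge x_M>0$ and weights $0<w_1\le w_2\le\cdots\le w_M$. A total resource $B>0$ is shared. The speedup function $s:[0,B]\to[0,\infty)$ satisfies: $s(0)=0$; $s$ is strictly increasing, strictly concave, differentiable, and $s'$ is continuous on $[0,B]$ (so $s'>0$ and $s'$ is strictly decreasing). A schedule consists of functions $\theta_i:(0,\infty)\to[0,B]$, $i=1,\dots,M$, each right-continuous in $t$, with $\sum_{i=1}^M\theta_i(t)\le B$ for all $t>0$. The service received by job $i$ on $[t_1,t_2]$ is $Q_i(t_1,t_2)=\int_{t_1}^{t_2}s(\theta_i(t))\,dt$. The completion time $T_i$ of job $i$ satisfies $Q_i(0,T_i)=x_i$, and $\theta_i(t)=0$ for $t>T_i$. OPT is the problem of choosing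 a schedule minimizing $J=\sum_{i=1}^M w_iT_i$. An optimal solution is a feasible schedule attaining the minimum; $T_i^*$ denotes its completion times. *)

theory Defs
  imports "HOL-Analysis.Analysis"
begin

definition strictly_concave_on :: "real set \<Rightarrow> (real \<Rightarrow> real) \<Rightarrow> bool" where
  "strictly_concave_on S f \<longleftrightarrow> convex S \<and>
     (\<forall>x\<in>S. \<forall>y\<in>S. x \<noteq> y \<longrightarrow> (\<forall>u. 0 < u \<and> u < 1 \<longrightarrow>
        f (u * x + (1 - u) * y) > u * f x + (1 - u) * f y))"

definition speedup :: "real \<Rightarrow> (real \<Rightarrow> real) \<Rightarrow> (real \<Rightarrow> real) \<Rightarrow> bool" where
  "speedup B s s' \<longleftrightarrow> B > 0 \<and> s 0 = 0 \<and> strict_mono_on {0..B} s \<and>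
     strictly_concave_on {0..B} s \<and>
     (\<forall>y\<in>{0..B}. (s has_real_derivative s' y) (at y within {0..B})) \<and>
     continuous_on {0..B} s'"

text \<open>A feasible schedule for jobs 0..M-1 (indices shifted by one w.r.t. the paper):
  allocations theta i t (meaningful for t > 0) together with completion times T i.\<close>
definition feasible_schedule ::
  "nat \<Rightarrow> (nat \<Rightarrow> real) \<Rightarrow> real \<Rightarrow> (real \<Rightarrow> real) \<Rightarrow>
   (nat \<Rightarrow> real \<Rightarrow> real) \<Rightarrow> (nat \<Rightarrow> real) \<Rightarrow> bool" where
  "feasible_schedule M x B s \<theta> T \<longleftrightarrow>
     (\<forall>i<M. \<forall>t>0. 0 \<le> \<theta> i t \<and> \<theta> i t \<le> B) \<and>
     (\<forall>i<M. \<forall>t>0. continuous (at_right t) (\<theta> i)) \<and>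
     (\<forall>t>0. (\<Sum>i<M. \<theta> i t) \<le> B) \<and>
     (\<forall>i<M. T i \<ge> 0 \<and> ((\<lambda>t. s (\<theta> i t)) has_integral x i) {0..T i}) \<and>
     (\<forall>i<M. \<forall>t>T i. \<theta> i t = 0)"

definition total_cost :: "nat \<Rightarrow> (nat \<Rightarrow> real) \<Rightarrow> (nat \<Rightarrow> real) \<Rightarrow> real" where
  "total_cost M w T = (\<Sum>i<M. w i * T i)"

definition optimal_schedule ::
  "nat \<Rightarrow> (nat \<Rightarrow> real) \<Rightarrow> (nat \<Rightarrow> real) \<Rightarrow> real \<Rightarrow> (real \<Rightarrow> real) \<Rightarrow>
   (nat \<Rightarrow> real \<Rightarrow> real) \<Rightarrow> (nat \<Rightarrow> real) \<Rightarrow> bool" where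
  "optimal_schedule M x w B s \<theta> T \<longleftrightarrow>
     feasible_schedule M x B s \<theta> T \<and>
     (\<forall>\<theta>' T'. feasible_schedule M x B s \<theta>' T' \<longrightarrow> total_cost M w T \<le> total_cost M w T')"

end

theory Submission
  imports Defs
begin


lemma sp_facts:
  assumes "speedup B s s'"
  shows "B > 0" "s 0 = 0" "strict_mono_on {0..B} s" "strictly_concave_on {0..B} s"
    "\<And>y. y \<in> {0..B} \<Longrightarrow> (s has_real_derivative s' y) (at y within {0..B})"
    "continuous_on {0..B} s'"
  using assms unfolding speedup_def by auto

lemma sp_cont: assumes "speedup B s s'" shows "continuous_on {0..B} s"
proof -
  have "\<forall>y\<in>{0..B}. continuous (at y within {0..B}) s"
    using sp_facts(5)[OF assms] DERIV_continuous by blast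
  then show ?thesis using continuous_on_eq_continuous_within by blast
qed

lemma sp_deriv_at: assumes "speedup B s s'" "0 < y" "y < B"
  shows "(s has_real_derivative s' y) (at y)"
  using sp_facts(5)[OF assms(1), of y] assms at_within_Icc_at[of 0 y B] by auto

lemma sp_slope:
  assumes sp: "speedup B s s'" and p: "0 \<le> p" "p < c" "c \<le> B"
  shows "(s c - s p) / (c - p) \<le> s' p"
proof -
  have d: "(s has_real_derivative s' p) (at p within {p..c})"
    using sp_facts(5)[OF sp, of p] p by (auto intro: DERIV_subset)
  hence lim: "((\<lambda>y. (s y - s p) / (y - p)) \<longlongrightarrow> s' p) (at_right p)"
    using has_field_derivative_iff at_within_Icc_at_right[OF p(2)] by metis
  have ev: "\<forall>\<^sub>F y in at_right p. (s c - s p) / (c - p) \<le> (s y - s p) / (y - p)"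
  proof -
    have "\<forall>\<^sub>F y in at_right p. y \<in> {p<..<c}" using eventually_at_right_real[OF p(2)] .
    moreover have "(s c - s p) / (c - p) \<le> (s y - s p) / (y - p)" if y: "y \<in> {p<..<c}" for y
    proof -
      define u where "u = (y - p) / (c - p)"
      have u: "0 < u" "u < 1" using y p by (auto simp: u_def field_simps)
      have "u * (c - p) = y - p" using p by (simp add: u_def)
      hence yu: "y = u * c + (1 - u) * p" by (simp add: algebra_simps)
      have "s (u * c + (1 - u) * p) > u * s c + (1 - u) * s p"
        using sp_facts(4)[OF sp] p u unfolding strictly_concave_on_def by auto
      hence "s y > u * s c + (1 - u) * s p" using yu by simp
      hence "s y - s p \<ge> u * (s c - s p)" by (simp add: algebra_simps)
      hence "(s y - s p) / (y - p) \<ge> u * (s c - s p) / (y - p)"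
        using y by (simp add: divide_right_mono)
      also have "u * (s c - s p) / (y - p) = (s c - s p) / (c - p)"
        using y p unfolding u_def by (simp add: divide_simps)
      finally show ?thesis .
    qed
    ultimately show ?thesis by (auto elim: eventually_mono)
  qed
  show ?thesis by (rule tendsto_lowerbound[OF lim ev]) simp
qed

lemma sp_pos: assumes sp: "speedup B s s'" and p: "0 \<le> p" "p < B"
  shows "s' p > 0"
proof -
  have "s p < s B" using sp_facts(3)[OF sp] p unfolding strict_mono_on_def by auto
  hence "0 < (s B - s p) / (B - p)" using p by simp
  also have "\<dots> \<le> s' p" by (rule sp_slope[OF sp p order_refl])
  finally show ?thesis .
qed

lemma sp_nonneg: assumes sp: "speedup B s s'" and p: "0 \<le> p" "p \<le> B"
  shows "s' p \<ge> 0"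
proof (cases "p < B")
  case True thus ?thesis using sp_pos[OF sp p(1)] by simp
next
  case False
  hence pB: "p = B" using p by simp
  have B0: "0 < B" using sp_facts(1)[OF sp] .
  have "((\<lambda>y. (s y - s B) / (y - B)) \<longlongrightarrow> s' B) (at_left B)"
    using sp_facts(5)[OF sp, of B] B0 has_field_derivative_iff at_within_Icc_at_left[OF B0] by fastforce
  moreover have "\<forall>\<^sub>F y in at_left B. 0 \<le> (s y - s B) / (y - B)"
  proof -
    have "\<forall>\<^sub>F y in at_left B. y \<in> {0<..<B}" using eventually_at_left_real[OF B0] .
    moreover have "0 \<le> (s y - s B) / (y - B)" if "y \<in> {0<..<B}" for y
    proof -
      have "s y < s B" using sp_facts(3)[OF sp] that unfolding strict_mono_on_def by auto
      thus ?thesis using that by (simp add: divide_nonpos_neg)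
    qed
    ultimately show ?thesis by (auto elim: eventually_mono)
  qed
  ultimately have "0 \<le> s' B" by (rule tendsto_lowerbound) simp
  thus ?thesis using pB by simp
qed

lemma sp_diff:
  assumes sp: "speedup B s s'" and uv: "0 \<le> v" "v \<le> u" "u \<le> B"
    and rho: "\<forall>y\<in>{0..B}. \<bar>y - p\<bar> < \<rho> \<longrightarrow> \<bar>s' y - s' p\<bar> < \<gamma>"
    and up: "\<bar>u - p\<bar> < \<rho>" and vp: "\<bar>v - p\<bar> < \<rho>"
  shows "(u - v) * (s' p - \<gamma>) \<le> s u - s v \<and> s u - s v \<le> (u - v) * (s' p + \<gamma>)"
proof (cases "v = u")
  case True thus ?thesis by simp
next
  case False
  hence vu: "v < u" using uv by simp
  have "continuous_on {v..u} s" by (rule continuous_on_subset[OF sp_cont[OF sp]]) (use uv in auto)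
  moreover have "s differentiable (at z)" if "v < z" "z < u" for z
    using sp_deriv_at[OF sp, of z] that uv real_differentiable_def by fastforce
  ultimately obtain l z where z: "v < z" "z < u" "DERIV s z :> l" "s u - s v = (u - v) * l"
    using MVT[OF vu] by blast
  have "l = s' z" using z sp_deriv_at[OF sp, of z] uv DERIV_unique by fastforce
  moreover have "\<bar>s' z - s' p\<bar> < \<gamma>" using rho z uv up vp by auto
  ultimately show ?thesis using z vu by (auto intro!: mult_left_mono simp: abs_less_iff)
qed



lemma rc_piece:
  fixes f g :: "real \<Rightarrow> real"
  assumes f: "continuous (at_right t) f" and g: "continuous (at_right t) g"
  shows "continuous (at_right t) (\<lambda>y. if a \<le> y \<and> y < b then g y else f y)"
proof -
  let ?h = "\<lambda>y. if a \<le> y \<and> y < b then g y else f y"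
  have F: "(f \<longlongrightarrow> f t) (at_right t)" and G: "(g \<longlongrightarrow> g t) (at_right t)"
    using f g by (auto simp: continuous_within)
  show ?thesis unfolding continuous_within
  proof (cases "t < a")
    case True
    have "\<forall>\<^sub>F y in at_right t. f y = ?h y"
      using eventually_at_right_real[OF True] by (auto elim: eventually_mono)
    from tendsto_cong[THEN iffD1, OF this F] have "(?h \<longlongrightarrow> f t) (at_right t)" .
    thus "(?h \<longlongrightarrow> ?h t) (at_right t)" using True by simp
  next
    case False
    show "(?h \<longlongrightarrow> ?h t) (at_right t)"
    proof (cases "t < b")
      case True
      have "\<forall>\<^sub>F y in at_right t. g y = ?h y"
        using eventually_at_right_real[OF True] False by (auto elim: eventually_mono)
      from tendsto_cong[THEN iffD1, OF this G] have "(?h \<longlongrightarrow> g t) (at_right t)" .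
      thus ?thesis using True False by simp
    next
      case False2: False
      have "\<forall>\<^sub>F y in at_right t. f y = ?h y"
        using eventually_at_right_less[of t] False2 by (auto elim: eventually_mono)
      from tendsto_cong[THEN iffD1, OF this F] have "(?h \<longlongrightarrow> f t) (at_right t)" .
      thus ?thesis using False2 by simp
    qed
  qed
qed

lemma rc_cut:
  fixes f :: "real \<Rightarrow> real"
  assumes f: "continuous (at_right t) f"
  shows "continuous (at_right t) (\<lambda>y. if y < c then f y else 0)"
proof -
  let ?h = "\<lambda>y. if y < c then f y else 0"
  have F: "(f \<longlongrightarrow> f t) (at_right t)" using f by (auto simp: continuous_within)
  show ?thesis unfolding continuous_within
  proof (cases "t < c")
    case True
    have "\<forall>\<^sub>F y in at_right t. f y = ?h y"
      using eventually_at_right_real[OF True] by (auto elim: eventually_mono)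
    from tendsto_cong[THEN iffD1, OF this F] have "(?h \<longlongrightarrow> f t) (at_right t)" .
    thus "(?h \<longlongrightarrow> ?h t) (at_right t)" using True by simp
  next
    case False
    have "\<forall>\<^sub>F y in at_right t. 0 = ?h y"
      using eventually_at_right_less[of t] False by (auto elim: eventually_mono)
    hence "(?h \<longlongrightarrow> 0) (at_right t)" using tendsto_cong[of "\<lambda>_. 0" ?h] by auto
    thus "(?h \<longlongrightarrow> ?h t) (at_right t)" using False by simp
  qed
qed

lemma cut_integral:
  fixes h :: "real \<Rightarrow> real"
  assumes h: "(h has_integral X) {0..T}" and T: "0 \<le> T" and x: "0 \<le> x" "x \<le> X"
  shows "\<exists>c. 0 \<le> c \<and> c \<le> T \<and> (x < X \<longrightarrow> c < T) \<and> (h has_integral x) {0..c}"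
proof -
  have hi: "h integrable_on {0..T}" using h by blast
  have cont: "continuous_on {0..T} (\<lambda>y. integral {0..y} h)"
    by (rule indefinite_integral_continuous_1[OF hi])
  have "integral {0..0} h \<le> x" using x by simp
  moreover have "x \<le> integral {0..T} h" using h x by (simp add: integral_unique)
  ultimately obtain c where c: "0 \<le> c" "c \<le> T" "integral {0..c} h = x"
    using IVT'[of "\<lambda>y. integral {0..y} h" 0 x T, OF _ _ T cont] by auto
  have ci: "h integrable_on {0..c}" by (rule integrable_subinterval_real[OF hi]) (use c in auto)
  have "x < X \<longrightarrow> c < T"
  proof
    assume "x < X"
    show "c < T"
    proof (rule ccontr)
      assume "\<not> c < T" hence "c = T" using c by simp
      thus False using c(3) h \<open>x < X\<close> by (simp add: integral_unique)
    qed
  qed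
  moreover have "(h has_integral x) {0..c}" using integrable_integral[OF ci] c(3) by simp
  ultimately show ?thesis using c by blast
qed

lemma modify_integral:
  fixes h :: "real \<Rightarrow> real"
  assumes h: "(h has_integral x) {0..T}" and tt: "0 \<le> t1" "t1 + \<delta> \<le> T" "0 \<le> t2" "t2 + \<delta> \<le> T"
    and d: "\<delta> > 0" and disj: "t1 + \<delta> < t2 \<or> t2 + \<delta> < t1"
    and L1: "\<forall>t\<in>{t1..t1+\<delta>}. a - h t \<ge> L1" and L2: "\<forall>t\<in>{t2..t2+\<delta>}. a' - h t \<ge> L2"
  shows "\<exists>X. ((\<lambda>t. if t1 \<le> t \<and> t < t1 + \<delta> then a else if t2 \<le> t \<and> t < t2 + \<delta> then a' else h t)
      has_integral X) {0..T} \<and> X \<ge> x + \<delta> * (L1 + L2)"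
proof -
  have hi: "h integrable_on {0..T}" using h by blast
  have i1: "(\<lambda>t. a - h t) integrable_on {t1..t1+\<delta>}"
    using integrable_subinterval_real[OF hi, of t1 "t1+\<delta>"] tt by (auto intro!: integrable_diff)
  have i2: "(\<lambda>t. a' - h t) integrable_on {t2..t2+\<delta>}"
    using integrable_subinterval_real[OF hi, of t2 "t2+\<delta>"] tt by (auto intro!: integrable_diff)
  define I1 where "I1 = integral {t1..t1+\<delta>} (\<lambda>t. a - h t)"
  define I2 where "I2 = integral {t2..t2+\<delta>} (\<lambda>t. a' - h t)"
  have I1: "I1 \<ge> \<delta> * L1"
  proof -
    have "integral {t1..t1+\<delta>} (\<lambda>t. L1) \<le> I1" unfolding I1_def
      by (rule integral_le[OF _ i1]) (use L1 in auto)
    thus ?thesis using d by simp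
  qed
  have I2: "I2 \<ge> \<delta> * L2"
  proof -
    have "integral {t2..t2+\<delta>} (\<lambda>t. L2) \<le> I2" unfolding I2_def
      by (rule integral_le[OF _ i2]) (use L2 in auto)
    thus ?thesis using d by simp
  qed
  have r1: "((\<lambda>t. if t \<in> {t1..t1+\<delta>} then a - h t else 0) has_integral I1) {0..T}"
    unfolding I1_def using has_integral_restrict_closed_subinterval[of "\<lambda>t. a - h t" _ t1 "t1+\<delta>" 0 T] i1 tt
    by (auto simp: has_integral_integral)
  have r2: "((\<lambda>t. if t \<in> {t2..t2+\<delta>} then a' - h t else 0) has_integral I2) {0..T}"
    unfolding I2_def using has_integral_restrict_closed_subinterval[of "\<lambda>t. a' - h t" _ t2 "t2+\<delta>" 0 T] i2 tt
    by (auto simp: has_integral_integral)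
  have G: "((\<lambda>t. h t + (if t \<in> {t1..t1+\<delta>} then a - h t else 0) + (if t \<in> {t2..t2+\<delta>} then a' - h t else 0))
     has_integral x + I1 + I2) {0..T}"
    by (intro has_integral_add h r1 r2)
  have "((\<lambda>t. if t1 \<le> t \<and> t < t1 + \<delta> then a else if t2 \<le> t \<and> t < t2 + \<delta> then a' else h t)
      has_integral x + I1 + I2) {0..T}"
  proof (rule has_integral_spike_finite[OF _ _ G])
    show "finite {t1+\<delta>, t2+\<delta>}" by simp
  next
    fix t assume "t \<in> {0..T} - {t1+\<delta>, t2+\<delta>}"
    thus "(if t1 \<le> t \<and> t < t1 + \<delta> then a else if t2 \<le> t \<and> t < t2 + \<delta> then a' else h t) =
      h t + (if t \<in> {t1..t1+\<delta>} then a - h t else 0) + (if t \<in> {t2..t2+\<delta>} then a' - h t else 0)"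
      using disj by auto
  qed
  thus ?thesis using I1 I2 by (intro exI[of _ "x + I1 + I2"]) (auto simp: algebra_simps)
qed



lemma rc_delta:
  fixes f :: "real \<Rightarrow> real"
  assumes f: "continuous (at_right t0) f" and e: "e > 0"
  shows "\<exists>d>0. \<forall>t. t0 \<le> t \<and> t \<le> t0 + d \<longrightarrow> \<bar>f t - f t0\<bar> < e"
proof -
  have "(f \<longlongrightarrow> f t0) (at_right t0)" using f by (simp add: continuous_within)
  hence "\<forall>\<^sub>F t in at_right t0. dist (f t) (f t0) < e" using e by (rule tendstoD)
  then obtain b where b: "b > t0" "\<forall>y>t0. y < b \<longrightarrow> dist (f y) (f t0) < e"
    unfolding eventually_at_right_field by blast
  show ?thesis
  proof (intro exI[of _ "(b - t0) / 2"] conjI allI impI)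
    show "(b - t0) / 2 > 0" using b by simp
  next
    fix t assume t: "t0 \<le> t \<and> t \<le> t0 + (b - t0) / 2"
    show "\<bar>f t - f t0\<bar> < e"
    proof (cases "t = t0")
      case True thus ?thesis using e by simp
    next
      case False
      have "t0 + (b - t0) / 2 < b" using b by (simp add: field_simps)
      hence "t > t0" "t < b" using b t False by auto
      thus ?thesis using b(2) by (simp add: dist_real_def)
    qed
  qed
qed

lemma eta_bound:
  fixes \<mu> m c E D :: real
  assumes "0 < \<mu>" "0 < m" "m \<le> c" "0 \<le> E" "E < D"
  shows "(\<mu> * m / D) * E < \<mu> * c"
proof -
  have D: "D > 0" using assms by linarith
  have "(\<mu> * m / D) * E = \<mu> * m * (E / D)" by simp
  also have "\<dots> \<le> \<mu> * c * (E / D)"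
    using assms D by (intro mult_right_mono mult_left_mono) auto
  also have "\<dots> < \<mu> * c"
  proof -
    have "E / D < 1" using assms D by simp
    moreover have "\<mu> * c > 0" using assms by simp
    ultimately show ?thesis using mult_strict_left_mono[of "E / D" 1 "\<mu> * c"] by simp
  qed
  finally show ?thesis .
qed

lemma sum_two_change:
  fixes f g :: "nat \<Rightarrow> real"
  assumes "finite A" "i \<in> A" "j \<in> A" "i \<noteq> j" "\<forall>l\<in>A. l \<noteq> i \<and> l \<noteq> j \<longrightarrow> f l = g l"
  shows "sum f A = sum g A + (f i - g i) + (f j - g j)"
proof -
  have "sum (\<lambda>l. f l - g l) A = sum (\<lambda>l. f l - g l) {i, j}"
    by (rule sum.mono_neutral_right) (use assms in auto)
  also have "\<dots> = (f i - g i) + (f j - g j)" using assms by simp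
  finally show ?thesis by (simp add: sum_subtractf)
qed



theorem theorem2:
  fixes M :: nat and x w :: "nat \<Rightarrow> real" and B :: real
    and s s' :: "real \<Rightarrow> real"
    and \<theta> :: "nat \<Rightarrow> real \<Rightarrow> real" and T :: "nat \<Rightarrow> real"
    and i j :: nat and t1 t2 :: real
  assumes sp: "speedup B s s'"
    and x_pos: "\<forall>k<M. x k > 0"
    and x_dec: "\<forall>k l. k \<le> l \<and> l < M \<longrightarrow> x l \<le> x k"
    and w_pos: "\<forall>k<M. w k > 0"
    and w_inc: "\<forall>k l. k \<le> l \<and> l < M \<longrightarrow> w k \<le> w l"
    and opt: "optimal_schedule M x w B s \<theta> T"
    and ij: "i < M" "j < M"
    and t_pos: "t1 > 0" "t2 > 0"
    and t_lt: "max t1 t2 < min (T i) (T j)"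
    and h1: "\<theta> i t1 > 0" "\<theta> j t1 > 0"
    and h2: "\<theta> i t2 > 0" "\<theta> j t2 = 0"
  shows "s' (\<theta> i t1) / s' (\<theta> j t1) \<le> s' (\<theta> i t2) / s' 0"
proof (rule ccontr)
  assume neg: "\<not> s' (\<theta> i t1) / s' (\<theta> j t1) \<le> s' (\<theta> i t2) / s' 0"
  have feas: "feasible_schedule M x B s \<theta> T"
    and optim: "\<And>\<theta>' T'. feasible_schedule M x B s \<theta>' T' \<Longrightarrow> total_cost M w T \<le> total_cost M w T'"
    using opt unfolding optimal_schedule_def by auto
  have bnd: "\<And>l t. l < M \<Longrightarrow> t > 0 \<Longrightarrow> 0 \<le> \<theta> l t \<and> \<theta> l t \<le> B"
    and rc: "\<And>l t. l < M \<Longrightarrow> t > 0 \<Longrightarrow> continuous (at_right t) (\<theta> l)"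
    and sumB: "\<And>t. t > 0 \<Longrightarrow> (\<Sum>l<M. \<theta> l t) \<le> B"
    and integ: "\<And>l. l < M \<Longrightarrow> T l \<ge> 0 \<and> ((\<lambda>t. s (\<theta> l t)) has_integral x l) {0..T l}"
    and zero: "\<And>l t. l < M \<Longrightarrow> t > T l \<Longrightarrow> \<theta> l t = 0"
    using feas unfolding feasible_schedule_def by auto
  have B0: "B > 0" using sp_facts(1)[OF sp] .
  have ijne: "i \<noteq> j" using h2 by auto
  have pair: "\<theta> i t + \<theta> j t \<le> B" if "t > 0" for t
  proof -
    have "\<theta> i t + \<theta> j t = (\<Sum>l\<in>{i,j}. \<theta> l t)" using ijne by simp
    also have "\<dots> \<le> (\<Sum>l<M. \<theta> l t)"
      by (rule sum_mono2) (use ij bnd that in auto)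
    also have "\<dots> \<le> B" using sumB that .
    finally show ?thesis .
  qed
  define a1 where "a1 = \<theta> i t1"
  define b1 where "b1 = \<theta> j t1"
  define a2 where "a2 = \<theta> i t2"
  have a1: "0 < a1" "a1 < B" using h1 pair[OF t_pos(1)] unfolding a1_def by auto
  have b1: "0 < b1" "b1 < B" using h1 pair[OF t_pos(1)] unfolding b1_def by auto
  have a2: "0 < a2" "a2 \<le> B" using h2 bnd[OF ij(1) t_pos(2)] unfolding a2_def by auto
  have ab1: "a1 + b1 \<le> B" using pair[OF t_pos(1)] unfolding a1_def b1_def .
  define P where "P = s' a1"
  define Q where "Q = s' b1"
  define R where "R = s' a2"
  define S where "S = s' 0"
  have P: "P > 0" unfolding P_def using sp_pos[OF sp] a1 by auto
  have Q: "Q > 0" unfolding Q_def using sp_pos[OF sp] b1 by auto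
  have R: "R \<ge> 0" unfolding R_def using sp_nonneg[OF sp] a2 by auto
  have S: "S > 0" unfolding S_def using sp_pos[OF sp] B0 by auto
  have negPQ: "R / S < P / Q" using neg unfolding P_def Q_def R_def S_def a1_def b1_def a2_def by simp
  hence "R * Q < P * S" using Q S by (simp add: field_simps)
  hence RPSQ: "R / P < S / Q" using P Q by (simp add: field_simps)
  define k where "k = (R / P + S / Q) / 2"
  have kP: "R < k * P"
  proof -
    have "R / P < k" using RPSQ unfolding k_def by argo
    thus ?thesis using P by (simp add: field_simps)
  qed
  have kQ: "k * Q < S"
  proof -
    have "k < S / Q" using RPSQ unfolding k_def by argo
    thus ?thesis using Q by (simp add: field_simps)
  qed
  have k0: "k > 0"
  proof -
    have "R / P \<ge> 0" "S / Q > 0" using R P S Q by auto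
    thus ?thesis unfolding k_def by argo
  qed
  define \<gamma> where "\<gamma> = min ((k * P - R) / (2 * (k + 1))) ((S - k * Q) / (2 * (k + 1)))"
  have g0: "\<gamma> > 0" unfolding \<gamma>_def using kP kQ k0 by simp
  define ci where "ci = k * (P - \<gamma>) - (R + \<gamma>)"
  define cj where "cj = (S - \<gamma>) - k * (Q + \<gamma>)"
  have ci: "ci > 0"
  proof -
    have "(k + 1) * \<gamma> \<le> (k + 1) * ((k * P - R) / (2 * (k + 1)))"
      unfolding \<gamma>_def using k0 by (intro mult_left_mono) auto
    also have "\<dots> = (k * P - R) / 2" using k0 by (simp add: field_simps)
    finally have "(k + 1) * \<gamma> \<le> (k * P - R) / 2" .
    thus ?thesis unfolding ci_def using kP by (simp add: algebra_simps)
  qed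
  have cj: "cj > 0"
  proof -
    have "(k + 1) * \<gamma> \<le> (k + 1) * ((S - k * Q) / (2 * (k + 1)))"
      unfolding \<gamma>_def using k0 by (intro mult_left_mono) auto
    also have "\<dots> = (S - k * Q) / 2" using k0 by (simp add: field_simps)
    finally have "(k + 1) * \<gamma> \<le> (S - k * Q) / 2" .
    thus ?thesis unfolding cj_def using kQ by (simp add: algebra_simps)
  qed
  have gP: "\<gamma> \<le> P"
  proof -
    have "k * (P - \<gamma>) > 0" using ci R g0 unfolding ci_def by linarith
    thus ?thesis using k0 by (simp add: zero_less_mult_iff)
  qed
  have gS: "\<gamma> \<le> S" using cj k0 Q g0 unfolding cj_def
    by (smt (verit) mult_pos_pos)
  have cont_s': "\<exists>\<rho>>0. \<forall>y\<in>{0..B}. \<bar>y - p\<bar> < \<rho> \<longrightarrow> \<bar>s' y - s' p\<bar> < \<gamma>" if "p \<in> {0..B}" for p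
    using sp_facts(6)[OF sp] that g0 unfolding continuous_on_iff dist_real_def by blast
  obtain \<rho>1 where r1: "\<rho>1 > 0" "\<forall>y\<in>{0..B}. \<bar>y - a1\<bar> < \<rho>1 \<longrightarrow> \<bar>s' y - P\<bar> < \<gamma>"
    using cont_s'[of a1] a1 unfolding P_def by auto
  obtain \<rho>2 where r2: "\<rho>2 > 0" "\<forall>y\<in>{0..B}. \<bar>y - b1\<bar> < \<rho>2 \<longrightarrow> \<bar>s' y - Q\<bar> < \<gamma>"
    using cont_s'[of b1] b1 unfolding Q_def by auto
  obtain \<rho>3 where r3: "\<rho>3 > 0" "\<forall>y\<in>{0..B}. \<bar>y - a2\<bar> < \<rho>3 \<longrightarrow> \<bar>s' y - R\<bar> < \<gamma>"
    using cont_s'[of a2] a2 unfolding R_def by auto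
  obtain \<rho>4 where r4: "\<rho>4 > 0" "\<forall>y\<in>{0..B}. \<bar>y - 0\<bar> < \<rho>4 \<longrightarrow> \<bar>s' y - S\<bar> < \<gamma>"
    using cont_s'[of 0] B0 unfolding S_def by auto
  define \<rho> where "\<rho> = min (min \<rho>1 \<rho>2) (min \<rho>3 \<rho>4)"
  have rho: "\<rho> > 0" "\<rho> \<le> \<rho>1" "\<rho> \<le> \<rho>2" "\<rho> \<le> \<rho>3" "\<rho> \<le> \<rho>4"
    unfolding \<rho>_def using r1 r2 r3 r4 by auto
  have rP: "\<forall>y\<in>{0..B}. \<bar>y - a1\<bar> < \<rho> \<longrightarrow> \<bar>s' y - s' a1\<bar> < \<gamma>" using r1 rho unfolding P_def by force
  have rQ: "\<forall>y\<in>{0..B}. \<bar>y - b1\<bar> < \<rho> \<longrightarrow> \<bar>s' y - s' b1\<bar> < \<gamma>" using r2 rho unfolding Q_def by force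
  have rR: "\<forall>y\<in>{0..B}. \<bar>y - a2\<bar> < \<rho> \<longrightarrow> \<bar>s' y - s' a2\<bar> < \<gamma>" using r3 rho unfolding R_def by force
  have rS: "\<forall>y\<in>{0..B}. \<bar>y - 0\<bar> < \<rho> \<longrightarrow> \<bar>s' y - s' 0\<bar> < \<gamma>" using r4 rho unfolding S_def by force
  define M0 where "M0 = min (min \<rho> a1) (min b1 a2)"
  have M0: "M0 > 0" "M0 \<le> \<rho>" "M0 \<le> a1" "M0 \<le> b1" "M0 \<le> a2"
    unfolding M0_def using rho a1 b1 a2 by auto
  define \<mu> where "\<mu> = M0 / (2 * (k + 1))"
  have mu0: "\<mu> > 0" unfolding \<mu>_def using M0 k0 by simp
  have kmu: "k * \<mu> < M0 / 2" "\<mu> < M0 / 2"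
    unfolding \<mu>_def using M0 k0 by (auto simp: field_simps)
  define m where "m = min (min 1 k) (min ci cj)"
  have m: "m > 0" "m \<le> 1" "m \<le> k" "m \<le> ci" "m \<le> cj"
    unfolding m_def using k0 ci cj by auto
  define D where "D = 5 + 4 * (P + R + S + Q + \<gamma>)"
  define \<eta> where "\<eta> = \<mu> * m / D"
  have D0: "D > 0" unfolding D_def using P Q R S g0 by simp
  have eta0: "\<eta> > 0" unfolding \<eta>_def using mu0 m D0 by simp
  have e1: "\<eta> * 4 < \<mu> * 1" unfolding \<eta>_def
    by (rule eta_bound) (use mu0 m P Q R S g0 in \<open>auto simp: D_def\<close>)
  have e2: "\<eta> * 4 < \<mu> * k" unfolding \<eta>_def
    by (rule eta_bound) (use mu0 m P Q R S g0 in \<open>auto simp: D_def\<close>)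
  have e3: "\<eta> * (2 * (P + R)) < \<mu> * ci" unfolding \<eta>_def
    by (rule eta_bound) (use mu0 m P Q R S g0 in \<open>auto simp: D_def\<close>)
  have e4: "\<eta> * (S + 2 * Q + \<gamma>) < \<mu> * cj" unfolding \<eta>_def
    by (rule eta_bound) (use mu0 m P Q R S g0 in \<open>auto simp: D_def\<close>)
  obtain d1 where d1: "d1 > 0" "\<forall>t. t1 \<le> t \<and> t \<le> t1 + d1 \<longrightarrow> \<bar>\<theta> i t - a1\<bar> < \<eta>"
    using rc_delta[OF rc[OF ij(1) t_pos(1)] eta0] unfolding a1_def by blast
  obtain d2 where d2: "d2 > 0" "\<forall>t. t1 \<le> t \<and> t \<le> t1 + d2 \<longrightarrow> \<bar>\<theta> j t - b1\<bar> < \<eta>"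
    using rc_delta[OF rc[OF ij(2) t_pos(1)] eta0] unfolding b1_def by blast
  obtain d3 where d3: "d3 > 0" "\<forall>t. t2 \<le> t \<and> t \<le> t2 + d3 \<longrightarrow> \<bar>\<theta> i t - a2\<bar> < \<eta>"
    using rc_delta[OF rc[OF ij(1) t_pos(2)] eta0] unfolding a2_def by blast
  obtain d4 where d4: "d4 > 0" "\<forall>t. t2 \<le> t \<and> t \<le> t2 + d4 \<longrightarrow> \<bar>\<theta> j t\<bar> < \<eta>"
    using rc_delta[OF rc[OF ij(2) t_pos(2)] eta0] h2(2) by auto
  have t12: "t1 \<noteq> t2" using h1(2) h2(2) by auto
  define hT where "hT = (min (T i) (T j) - max t1 t2) / 2"
  define h12 where "h12 = \<bar>t1 - t2\<bar> / 2"
  have hT: "hT > 0" "max t1 t2 + 2 * hT = min (T i) (T j)" unfolding hT_def using t_lt by (auto simp: field_simps)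
  have h12: "h12 > 0" "2 * h12 = \<bar>t1 - t2\<bar>" unfolding h12_def using t12 by auto
  define \<delta> where "\<delta> = min (min (min d1 d2) (min d3 d4)) (min hT h12)"
  have dl: "\<delta> > 0" "\<delta> \<le> d1" "\<delta> \<le> d2" "\<delta> \<le> d3" "\<delta> \<le> d4" "\<delta> \<le> hT" "\<delta> \<le> h12"
    unfolding \<delta>_def using d1(1) d2(1) d3(1) d4(1) hT(1) h12(1) by (simp_all add: min_le_iff_disj)
  have tT: "t1 + \<delta> < T i" "t1 + \<delta> < T j" "t2 + \<delta> < T i" "t2 + \<delta> < T j"
    using dl(1,6) hT by auto
  have disj: "t1 + \<delta> < t2 \<or> t2 + \<delta> < t1" using dl(1,7) h12 by auto
  have K1: "0 < t \<and> \<bar>\<theta> i t - a1\<bar> < \<eta> \<and> \<bar>\<theta> j t - b1\<bar> < \<eta>" if "t \<in> {t1..t1+\<delta>}" for t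
    using that d1 d2 dl t_pos by auto
  have K2: "0 < t \<and> \<bar>\<theta> i t - a2\<bar> < \<eta> \<and> \<bar>\<theta> j t\<bar> < \<eta>" if "t \<in> {t2..t2+\<delta>}" for t
    using that d3 d4 dl t_pos by auto
  define A1 where "A1 = a1 - \<eta> + k * \<mu>"
  define B1 where "B1 = b1 - \<eta> - k * \<mu>"
  define A2 where "A2 = a2 - \<eta> - \<mu>"
  define B2 where "B2 = \<mu>"
  have kmu0: "k * \<mu> > 0" using k0 mu0 by simp
  have A1: "0 \<le> A1" "A1 \<le> B" and B1: "0 \<le> B1" "B1 \<le> B" and A2: "0 \<le> A2" "A2 \<le> B"
    and B2: "0 \<le> B2" "B2 \<le> B"
    unfolding A1_def B1_def A2_def B2_def using M0 kmu e1 e2 mu0 eta0 k0 a1 b1 a2 ab1 kmu0 by linarith+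
  have e2': "\<eta> * 4 < k * \<mu>" using e2 by (simp add: mult.commute)
  have etarho: "\<eta> < \<rho>" "k * \<mu> + \<eta> < \<rho>" "\<mu> + \<eta> < \<rho>" "2 * \<eta> < \<rho>"
    using M0 kmu e1 e2 eta0 mu0 by linarith+
  have pi1: "s A1 - s (\<theta> i t) \<ge> (k * \<mu> - 2 * \<eta>) * (P - \<gamma>)" if t: "t \<in> {t1..t1+\<delta>}" for t
  proof -
    have t0: "0 < t" and ai: "\<bar>\<theta> i t - a1\<bar> < \<eta>" using K1[OF t] by auto
    have bd: "0 \<le> \<theta> i t" using bnd[OF ij(1) t0] by auto
    have vu: "\<theta> i t \<le> A1" using ai e2' eta0 unfolding A1_def abs_less_iff by linarith
    have "\<bar>A1 - a1\<bar> < \<rho>" using etarho kmu0 e2' eta0 unfolding A1_def abs_less_iff by linarith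
    moreover have "\<bar>\<theta> i t - a1\<bar> < \<rho>" using ai etarho by simp
    ultimately have "(A1 - \<theta> i t) * (s' a1 - \<gamma>) \<le> s A1 - s (\<theta> i t)"
      using sp_diff[OF sp bd vu A1(2) rP] by blast
    moreover have "(k * \<mu> - 2 * \<eta>) * (P - \<gamma>) \<le> (A1 - \<theta> i t) * (P - \<gamma>)"
      using gP ai unfolding A1_def by (intro mult_right_mono) (auto simp: abs_less_iff)
    ultimately show ?thesis unfolding P_def by linarith
  qed
  have pj1: "s B1 - s (\<theta> j t) \<ge> - ((2 * \<eta> + k * \<mu>) * (Q + \<gamma>))" if t: "t \<in> {t1..t1+\<delta>}" for t
  proof -
    have t0: "0 < t" and bj: "\<bar>\<theta> j t - b1\<bar> < \<eta>" using K1[OF t] by auto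
    have bd: "\<theta> j t \<le> B" using bnd[OF ij(2) t0] by auto
    have vu: "B1 \<le> \<theta> j t" using bj kmu0 unfolding B1_def by (simp add: abs_less_iff)
    have "\<bar>B1 - b1\<bar> < \<rho>" using etarho kmu0 eta0 unfolding B1_def by (simp add: abs_less_iff)
    moreover have "\<bar>\<theta> j t - b1\<bar> < \<rho>" using bj etarho by simp
    ultimately have "s (\<theta> j t) - s B1 \<le> (\<theta> j t - B1) * (s' b1 + \<gamma>)"
      using sp_diff[OF sp B1(1) vu bd rQ] by blast
    moreover have "(\<theta> j t - B1) * (Q + \<gamma>) \<le> (2 * \<eta> + k * \<mu>) * (Q + \<gamma>)"
      using Q g0 bj unfolding B1_def by (intro mult_right_mono) (auto simp: abs_less_iff)
    ultimately show ?thesis unfolding Q_def by linarith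
  qed
  have pi2: "s A2 - s (\<theta> i t) \<ge> - ((2 * \<eta> + \<mu>) * (R + \<gamma>))" if t: "t \<in> {t2..t2+\<delta>}" for t
  proof -
    have t0: "0 < t" and ai: "\<bar>\<theta> i t - a2\<bar> < \<eta>" using K2[OF t] by auto
    have bd: "\<theta> i t \<le> B" using bnd[OF ij(1) t0] by auto
    have vu: "A2 \<le> \<theta> i t" using ai mu0 unfolding A2_def by (simp add: abs_less_iff)
    have "\<bar>A2 - a2\<bar> < \<rho>" using etarho mu0 eta0 unfolding A2_def by (simp add: abs_less_iff)
    moreover have "\<bar>\<theta> i t - a2\<bar> < \<rho>" using ai etarho by simp
    ultimately have "s (\<theta> i t) - s A2 \<le> (\<theta> i t - A2) * (s' a2 + \<gamma>)"
      using sp_diff[OF sp A2(1) vu bd rR] by blast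
    moreover have "(\<theta> i t - A2) * (R + \<gamma>) \<le> (2 * \<eta> + \<mu>) * (R + \<gamma>)"
      using R g0 ai unfolding A2_def by (intro mult_right_mono) (auto simp: abs_less_iff)
    ultimately show ?thesis unfolding R_def by linarith
  qed
  have pj2: "s B2 - s (\<theta> j t) \<ge> (\<mu> - \<eta>) * (S - \<gamma>)" if t: "t \<in> {t2..t2+\<delta>}" for t
  proof -
    have t0: "0 < t" and bj: "\<bar>\<theta> j t\<bar> < \<eta>" using K2[OF t] by auto
    have bd: "0 \<le> \<theta> j t" using bnd[OF ij(2) t0] by auto
    have vu: "\<theta> j t \<le> B2" using bj e1 eta0 unfolding B2_def by (simp add: abs_less_iff)
    have "\<bar>B2 - 0\<bar> < \<rho>" using etarho mu0 eta0 unfolding B2_def by simp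
    moreover have "\<bar>\<theta> j t - 0\<bar> < \<rho>" using bj etarho by simp
    ultimately have "(B2 - \<theta> j t) * (s' 0 - \<gamma>) \<le> s B2 - s (\<theta> j t)"
      using sp_diff[OF sp bd vu B2(2) rS] by blast
    moreover have "(\<mu> - \<eta>) * (S - \<gamma>) \<le> (B2 - \<theta> j t) * (S - \<gamma>)"
      using gS bj unfolding B2_def by (intro mult_right_mono) (auto simp: abs_less_iff)
    ultimately show ?thesis unfolding S_def by linarith
  qed
  have Li: "(k * \<mu> - 2 * \<eta>) * (P - \<gamma>) + - ((2 * \<eta> + \<mu>) * (R + \<gamma>)) > 0"
  proof -
    have "(k * \<mu> - 2 * \<eta>) * (P - \<gamma>) + - ((2 * \<eta> + \<mu>) * (R + \<gamma>)) = \<mu> * ci - \<eta> * (2 * (P + R))"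
      unfolding ci_def by (simp add: algebra_simps)
    thus ?thesis using e3 by simp
  qed
  have Lj: "- ((2 * \<eta> + k * \<mu>) * (Q + \<gamma>)) + (\<mu> - \<eta>) * (S - \<gamma>) > 0"
  proof -
    have "- ((2 * \<eta> + k * \<mu>) * (Q + \<gamma>)) + (\<mu> - \<eta>) * (S - \<gamma>) = \<mu> * cj - \<eta> * (S + 2 * Q + \<gamma>)"
      unfolding cj_def by (simp add: algebra_simps)
    thus ?thesis using e4 by simp
  qed
  define fi where "fi = (\<lambda>t. if t1 \<le> t \<and> t < t1 + \<delta> then A1 else if t2 \<le> t \<and> t < t2 + \<delta> then A2 else \<theta> i t)"
  define fj where "fj = (\<lambda>t. if t1 \<le> t \<and> t < t1 + \<delta> then B1 else if t2 \<le> t \<and> t < t2 + \<delta> then B2 else \<theta> j t)"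
  have tT0: "0 \<le> t1" "t1 + \<delta> \<le> T i" "0 \<le> t2" "t2 + \<delta> \<le> T i" "t1 + \<delta> \<le> T j" "t2 + \<delta> \<le> T j"
    using t_pos tT by auto
  obtain Xi where Xi: "((\<lambda>t. if t1 \<le> t \<and> t < t1 + \<delta> then s A1 else if t2 \<le> t \<and> t < t2 + \<delta> then s A2 else s (\<theta> i t))
      has_integral Xi) {0..T i}" "Xi \<ge> x i + \<delta> * ((k * \<mu> - 2 * \<eta>) * (P - \<gamma>) + - ((2 * \<eta> + \<mu>) * (R + \<gamma>)))"
    using modify_integral[OF conjunct2[OF integ[OF ij(1)]] tT0(1,2,3,4) dl(1) disj] pi1 pi2 by blast
  obtain Xj where Xj: "((\<lambda>t. if t1 \<le> t \<and> t < t1 + \<delta> then s B1 else if t2 \<le> t \<and> t < t2 + \<delta> then s B2 else s (\<theta> j t))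
      has_integral Xj) {0..T j}" "Xj \<ge> x j + \<delta> * (- ((2 * \<eta> + k * \<mu>) * (Q + \<gamma>)) + (\<mu> - \<eta>) * (S - \<gamma>))"
    using modify_integral[OF conjunct2[OF integ[OF ij(2)]] tT0(1,5,3,6) dl(1) disj] pj1 pj2 by blast
  have fiI: "((\<lambda>t. s (fi t)) has_integral Xi) {0..T i}"
  proof -
    have "(\<lambda>t. s (fi t)) = (\<lambda>t. if t1 \<le> t \<and> t < t1 + \<delta> then s A1 else if t2 \<le> t \<and> t < t2 + \<delta> then s A2 else s (\<theta> i t))"
      by (rule ext) (simp add: fi_def)
    thus ?thesis using Xi(1) by simp
  qed
  have fjI: "((\<lambda>t. s (fj t)) has_integral Xj) {0..T j}"
  proof -
    have "(\<lambda>t. s (fj t)) = (\<lambda>t. if t1 \<le> t \<and> t < t1 + \<delta> then s B1 else if t2 \<le> t \<and> t < t2 + \<delta> then s B2 else s (\<theta> j t))"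
      by (rule ext) (simp add: fj_def)
    thus ?thesis using Xj(1) by simp
  qed
  have Xi_gt: "x i < Xi" using Xi(2) Li dl(1) by (smt (verit) mult_pos_pos)
  have Xj_gt: "x j < Xj" using Xj(2) Lj dl(1) by (smt (verit) mult_pos_pos)
  obtain ci' where ci': "0 \<le> ci'" "ci' < T i" "((\<lambda>t. s (fi t)) has_integral x i) {0..ci'}"
    using cut_integral[OF fiI _ _ less_imp_le[OF Xi_gt]] integ[OF ij(1)] x_pos ij Xi_gt by force
  obtain cj' where cj': "0 \<le> cj'" "cj' < T j" "((\<lambda>t. s (fj t)) has_integral x j) {0..cj'}"
    using cut_integral[OF fjI _ _ less_imp_le[OF Xj_gt]] integ[OF ij(2)] x_pos ij Xj_gt by force
  define th where "th = (\<lambda>l t. if l = i then (if t < ci' then fi t else 0)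
      else if l = j then (if t < cj' then fj t else 0) else \<theta> l t)"
  define TT where "TT = (\<lambda>l. if l = i then ci' else if l = j then cj' else T l)"
  have thi: "th i = (\<lambda>t. if t < ci' then fi t else 0)" by (simp add: th_def fun_eq_iff)
  have thj: "th j = (\<lambda>t. if t < cj' then fj t else 0)" using ijne by (simp add: th_def fun_eq_iff)
  have tho: "th l = \<theta> l" if "l \<noteq> i" "l \<noteq> j" for l using that by (simp add: th_def fun_eq_iff)
  have fi_bd: "0 \<le> fi t \<and> fi t \<le> B" if "t > 0" for t
    unfolding fi_def using A1 A2 bnd[OF ij(1) that] by auto
  have fj_bd: "0 \<le> fj t \<and> fj t \<le> B" if "t > 0" for t
    unfolding fj_def using B1 B2 bnd[OF ij(2) that] by auto
  have fi_rc: "continuous (at_right t) fi" if "t > 0" for t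
    unfolding fi_def by (intro rc_piece continuous_const rc[OF ij(1) that])
  have fj_rc: "continuous (at_right t) fj" if "t > 0" for t
    unfolding fj_def by (intro rc_piece continuous_const rc[OF ij(2) that])
  have fij: "fi t + fj t \<le> \<theta> i t + \<theta> j t" if t0: "t > 0" for t
  proof (cases "t1 \<le> t \<and> t < t1 + \<delta>")
    case True
    hence "t \<in> {t1..t1+\<delta>}" by auto
    from K1[OF this] have "a1 + b1 - 2 * \<eta> \<le> \<theta> i t + \<theta> j t" by (auto simp: abs_less_iff)
    moreover have "fi t = A1" "fj t = B1" using True unfolding fi_def fj_def by auto
    ultimately show ?thesis unfolding A1_def B1_def by linarith
  next
    case F1: False
    show ?thesis
    proof (cases "t2 \<le> t \<and> t < t2 + \<delta>")
      case True
      hence "t \<in> {t2..t2+\<delta>}" by auto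
      from K2[OF this] have "a2 - \<eta> \<le> \<theta> i t" by (auto simp: abs_less_iff)
      moreover have "0 \<le> \<theta> j t" using bnd[OF ij(2) t0] by auto
      moreover have "fi t = A2" "fj t = B2" using True F1 unfolding fi_def fj_def by auto
      ultimately show ?thesis unfolding A2_def B2_def by linarith
    next
      case False
      hence "fi t = \<theta> i t" "fj t = \<theta> j t" using F1 unfolding fi_def fj_def by auto
      thus ?thesis by simp
    qed
  qed
  have feas2: "feasible_schedule M x B s th TT"
    unfolding feasible_schedule_def
  proof (intro conjI allI impI)
    fix l t assume l: "l < M" and t: "0 < (t::real)"
    show "0 \<le> th l t" "th l t \<le> B"
      using fi_bd[OF t] fj_bd[OF t] bnd[OF l t] B0 by (auto simp: th_def)
    show "continuous (at_right t) (th l)"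
    proof -
      consider "l = i" | "l = j" | "l \<noteq> i" "l \<noteq> j" by blast
      thus ?thesis
      proof cases
        case 1 thus ?thesis using thi rc_cut[OF fi_rc[OF t]] by simp
      next
        case 2 thus ?thesis using thj rc_cut[OF fj_rc[OF t]] by simp
      next
        case 3 thus ?thesis using tho rc[OF l t] by simp
      qed
    qed
  next
    fix t :: real assume t: "0 < t"
    have "(\<Sum>l<M. th l t) = (\<Sum>l<M. \<theta> l t) + (th i t - \<theta> i t) + (th j t - \<theta> j t)"
      by (rule sum_two_change) (use ij ijne tho in auto)
    moreover have "th i t \<le> fi t" "th j t \<le> fj t" using fi_bd[OF t] fj_bd[OF t] thi thj by auto
    ultimately show "(\<Sum>l<M. th l t) \<le> B" using fij[OF t] sumB[OF t] by linarith
  next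
    fix l assume l: "l < M"
    consider "l = i" | "l = j" | "l \<noteq> i" "l \<noteq> j" by blast
    hence "0 \<le> TT l \<and> ((\<lambda>t. s (th l t)) has_integral x l) {0..TT l}"
    proof cases
      case 1
      have "((\<lambda>t. s (th i t)) has_integral x i) {0..ci'}"
        by (rule has_integral_spike_finite[OF _ _ ci'(3), of "{ci'}"]) (auto simp: thi)
      thus ?thesis using 1 ci' by (simp add: TT_def)
    next
      case 2
      have "((\<lambda>t. s (th j t)) has_integral x j) {0..cj'}"
        by (rule has_integral_spike_finite[OF _ _ cj'(3), of "{cj'}"]) (auto simp: thj)
      thus ?thesis using 2 cj' ijne by (simp add: TT_def)
    next
      case 3 thus ?thesis using integ[OF l] tho by (simp add: TT_def)
    qed
    thus "0 \<le> TT l" "((\<lambda>t. s (th l t)) has_integral x l) {0..TT l}" by auto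
  next
    fix l t assume l: "l < M" and t: "TT l < t"
    consider "l = i" | "l = j" | "l \<noteq> i" "l \<noteq> j" by blast
    thus "th l t = 0"
    proof cases
      case 1 thus ?thesis using t by (simp add: thi TT_def)
    next
      case 2 thus ?thesis using t ijne by (simp add: thj TT_def)
    next
      case 3 thus ?thesis using t zero[OF l] tho by (simp add: TT_def)
    qed
  qed
  have "total_cost M w TT < total_cost M w T"
    unfolding total_cost_def
  proof (rule sum_strict_mono_ex1)
    show "\<forall>l\<in>{..<M}. w l * TT l \<le> w l * T l"
      using w_pos ci' cj' by (auto simp: TT_def less_imp_le)
    show "\<exists>l\<in>{..<M}. w l * TT l < w l * T l"
      using w_pos ci' ij by (intro bexI[of _ i]) (auto simp: TT_def)
  qed simp
  with optim[OF feas2] show False by simp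
qed

end
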